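(* Let $\mathbf c=\{c_n\}_{n=1}^{\infty}$ be a complex sequence with $\lim_{n\to\infty}c_n=0$, and let $\{R(n)\}$ be an $O$-regularly varying sequence such that for some constant $M(\mathbf c)>0$ $$\sum_{n=m}^{\infty}\left|\frac{c_n}{R(n)}-\frac{c_{n+1}}{R(n+1)}\right|\le M(\mathbf c)\frac{|c_m|}{R(m)}\qquad\text{for all } m=1,2,\dots.$$ Then there exist a natural number $N_0$ and a constant $M'>0$ such that $$\sum_{n=m}^{2m}|c_n-c_{n+1}|\le M'\max_{m\le n<m+N_0}|c_n|\qquad\text{for all } m=1,2,\dots.$$
   Context: A sequence $\{R(n)\}_{n=0}^\infty$ is $O$-regularly varying if it is non-decreasing, positive, and $\limsup_{n\to\infty}R(2n)/R(n)<\infty$. *)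

theory Defs
  imports "HOL-Analysis.Analysis"
begin

definition O_regularly_varying :: "(nat \<Rightarrow> real) \<Rightarrow> bool" where
  "O_regularly_varying R \<longleftrightarrow>
     mono R \<and> (\<forall>n. R n > 0) \<and>
     limsup (\<lambda>n. ereal (R (2 * n) / R n)) < \<infinity>"

end

theory Submission
  imports Defs
begin

lemma orv_bound:
  assumes "O_regularly_varying R"
  shows "\<exists>K>0. \<forall>n. R (2*n) \<le> K * R n"
proof -
  have pos: "\<And>n. R n > 0" and ls: "limsup (\<lambda>n. ereal (R (2 * n) / R n)) < \<infinity>"
    using assms unfolding O_regularly_varying_def by auto
  obtain L :: nat where L: "limsup (\<lambda>n. ereal (R (2 * n) / R n)) < ereal (real L)"
    using ls less_PInf_Ex_of_nat by auto
  have "eventually (\<lambda>n. ereal (R (2 * n) / R n) < ereal (real L)) sequentially"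
    using Limsup_lessD[OF L] .
  then obtain N where N: "\<And>n. n \<ge> N \<Longrightarrow> R (2 * n) / R n < real L"
    unfolding eventually_sequentially by auto
  define K where "K = real L + 1 + (\<Sum>k<N. R (2*k) / R k)"
  have nn: "\<And>k. 0 \<le> R (2*k) / R k" using pos by (simp add: less_imp_le)
  have K0: "K > 0" unfolding K_def using nn by (simp add: add_pos_nonneg sum_nonneg)
  have "R (2*n) / R n \<le> K" for n
  proof (cases "n \<ge> N")
    case True
    then show ?thesis using N[OF True] nn unfolding K_def
      by (smt (verit) sum_nonneg)
  next
    case False
    then have "R (2*n) / R n \<le> (\<Sum>k<N. R (2*k) / R k)"
      using nn by (intro member_le_sum) auto
    then show ?thesis unfolding K_def by simp
  qed
  then have "R (2*n) \<le> K * R n" for n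
    using pos[of n] by (simp add: divide_le_eq)
  then show ?thesis using K0 by auto
qed

theorem theorem3:
  fixes c :: "nat \<Rightarrow> complex" and R :: "nat \<Rightarrow> real" and M :: real
  assumes c_lim: "c \<longlonglongrightarrow> 0"
    and R_orv: "O_regularly_varying R"
    and M_pos: "M > 0"
    and cond: "\<And>m. m \<ge> 1 \<Longrightarrow>
        summable (\<lambda>n. norm (c (n + m) / of_real (R (n + m)) - c (n + m + 1) / of_real (R (n + m + 1))))
      \<and> (\<Sum>n. norm (c (n + m) / of_real (R (n + m)) - c (n + m + 1) / of_real (R (n + m + 1))))
          \<le> M * norm (c m) / R m"
  shows "\<exists>(N0::nat) M'. N0 \<ge> 1 \<and> M' > 0 \<and>
    (\<forall>m\<ge>1. (\<Sum>n=m..2*m. norm (c n - c (n + 1))) \<le> M' * Max ((\<lambda>n. norm (c n)) ` {m..<m + N0}))"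
proof -
  have pos: "\<And>n. R n > 0" and mono: "mono R"
    using R_orv unfolding O_regularly_varying_def by auto
  obtain K where K0: "K > 0" and K: "\<And>n. R (2*n) \<le> K * R n"
    using orv_bound[OF R_orv] by auto
  define a where "a n = c n / of_real (R n)" for n
  have a_lim: "a \<longlonglongrightarrow> 0"
  proof (rule Lim_null_comparison)
    show "eventually (\<lambda>n. norm (a n) \<le> norm (c n) / R 0) sequentially"
    proof (intro always_eventually allI)
      fix n
      have "R 0 \<le> R n" using mono by (simp add: monoD)
      then have "norm (c n) / R n \<le> norm (c n) / R 0"
        using pos by (intro divide_left_mono) auto
      then show "norm (a n) \<le> norm (c n) / R 0"
        unfolding a_def using pos[of n] by (simp add: norm_divide)
    qed
    show "(\<lambda>n. norm (c n) / R 0) \<longlonglongrightarrow> 0"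
      using tendsto_divide_zero[OF tendsto_norm_zero[OF c_lim]] by simp
  qed
  define d where "d m k = norm (a (k + m) - a (k + m + 1))" for m k
  have dsum: "summable (d m)" and dle: "suminf (d m) \<le> M * norm (c m) / R m" if "m \<ge> 1" for m
    using cond[OF that] unfolding d_def a_def by auto
  have tele: "a (m + i) - a (m + i + p) = (\<Sum>k\<in>{i..<i+p}. a (k + m) - a (k + m + 1))" for m i p
  proof (induction p)
    case 0 then show ?case by simp
  next
    case (Suc p)
    have "a (m + i) - a (m + i + Suc p) = (a (m + i) - a (m + i + p)) + (a ((i+p) + m) - a ((i+p) + m + 1))"
      by (simp add: algebra_simps)
    also have "\<dots> = (\<Sum>k\<in>{i..<i+Suc p}. a (k + m) - a (k + m + 1))"
      using Suc by simp
    finally show ?case .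
  qed
  have abound: "norm (a (m + i)) \<le> suminf (d m)" if m1: "m \<ge> 1" for m i
  proof (rule LIMSEQ_le_const2)
    show "(\<lambda>p. norm (a (m + i) - a (m + i + p))) \<longlonglongrightarrow> norm (a (m + i))"
    proof -
      have "(\<lambda>p. a (m + i + p)) \<longlonglongrightarrow> 0"
        using LIMSEQ_ignore_initial_segment[OF a_lim, of "m+i"] by (simp add: add.commute)
      then have "(\<lambda>p. a (m + i) - a (m + i + p)) \<longlonglongrightarrow> a (m + i) - 0"
        by (intro tendsto_diff) auto
      then show ?thesis using tendsto_norm by fastforce
    qed
    show "\<exists>N. \<forall>p\<ge>N. norm (a (m + i) - a (m + i + p)) \<le> suminf (d m)"
    proof (intro exI allI impI)
      fix p :: nat
      have "norm (a (m + i) - a (m + i + p)) \<le> (\<Sum>k\<in>{i..<i+p}. d m k)"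
        unfolding d_def tele[of m i p] by (rule norm_sum)
      also have "\<dots> \<le> sum (d m) {..<i+p}"
        by (intro sum_mono2) (auto simp: d_def)
      also have "\<dots> \<le> suminf (d m)"
        by (intro sum_le_suminf dsum[OF m1]) (auto simp: d_def)
      finally show "norm (a (m + i) - a (m + i + p)) \<le> suminf (d m)" .
    qed
  qed
  define M' where "M' = 2 * K * K * M"
  have M'0: "M' > 0" unfolding M'_def using K0 M_pos by simp
  have main: "(\<Sum>n=m..2*m. norm (c n - c (n + 1))) \<le> M' * norm (c m)" if m1: "m \<ge> 1" for m
  proof -
    define B where "B = M * norm (c m) / R m"
    have B0: "B \<ge> 0" unfolding B_def using M_pos pos[of m] by simp
    have step: "norm (c n - c (n + 1)) \<le> R (2*m) * d m (n - m) + (R (n+1) - R n) * B"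
      if n: "n \<in> {m..2*m}" for n
    proof -
      have cn: "c k = of_real (R k) * a k" for k
        unfolding a_def using pos[of k] by simp
      have eq: "c n - c (n + 1) = of_real (R n) * (a n - a (n+1)) + of_real (R n - R (n+1)) * a (n+1)"
        unfolding cn by (simp add: algebra_simps)
      have Rle: "R n \<le> R (n+1)" using mono by (simp add: monoD)
      have "norm (c n - c (n + 1)) \<le> norm (of_real (R n) * (a n - a (n+1))) + norm (of_real (R n - R (n+1)) * a (n+1))"
        unfolding eq by (rule norm_triangle_ineq)
      also have "\<dots> = R n * norm (a n - a (n+1)) + (R (n+1) - R n) * norm (a (n+1))"
      proof -
        have "norm (of_real (R n - R (n+1)) :: complex) = R (n+1) - R n"
          using Rle by (simp only: norm_of_real)
        then show ?thesis using pos[of n] by (simp only: norm_mult) simp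
      qed
      also have "\<dots> \<le> R (2*m) * d m (n - m) + (R (n+1) - R n) * B"
      proof (intro add_mono mult_mono)
        show "R n \<le> R (2*m)" using mono n by (simp add: monoD)
        show "norm (a n - a (n+1)) \<le> d m (n - m)" using n by (simp add: d_def)
        show "norm (a (n+1)) \<le> B"
          using abound[OF m1, of "n + 1 - m"] dle[OF m1] n unfolding B_def by simp
      qed (use pos[of "2*m"] Rle in auto)
      finally show ?thesis .
    qed
    have "(\<Sum>n=m..2*m. norm (c n - c (n + 1))) \<le> (\<Sum>n=m..2*m. R (2*m) * d m (n - m) + (R (n+1) - R n) * B)"
      by (rule sum_mono) (rule step)
    also have "\<dots> = R (2*m) * (\<Sum>n=m..2*m. d m (n - m)) + (\<Sum>n=m..2*m. R (Suc n) - R n) * B"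
      by (simp add: sum.distrib sum_distrib_left sum_distrib_right)
    also have "(\<Sum>n=m..2*m. R (Suc n) - R n) = R (Suc (2*m)) - R m"
      by (rule sum_Suc_diff) simp
    also have "(\<Sum>n=m..2*m. d m (n - m)) = (\<Sum>k\<in>{..m}. d m k)"
    proof -
      have "(\<Sum>n=m..2*m. d m (n - m)) = (\<Sum>k=0..m. d m k)"
        using sum.shift_bounds_cl_nat_ivl[of "\<lambda>k. d m (k - m)" 0 m m, symmetric]
        by (simp add: mult_2)
      then show ?thesis by (simp add: atLeast0AtMost)
    qed
    finally have S1: "(\<Sum>n=m..2*m. norm (c n - c (n + 1))) \<le> R (2*m) * (\<Sum>k\<in>{..m}. d m k) + (R (Suc (2*m)) - R m) * B" .
    have "(\<Sum>k\<in>{..m}. d m k) \<le> B"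
      using sum_le_suminf[OF dsum[OF m1], of "{..m}"] dle[OF m1] unfolding B_def
      by (force simp: d_def)
    then have "R (2*m) * (\<Sum>k\<in>{..m}. d m k) \<le> R (2*m) * B"
      using pos[of "2*m"] by (simp add: mult_left_mono)
    moreover have "(R (Suc (2*m)) - R m) * B \<le> R (Suc (2*m)) * B"
      using B0 pos[of m] by (intro mult_right_mono) auto
    ultimately have "R (2*m) * (\<Sum>k\<in>{..m}. d m k) + (R (Suc (2*m)) - R m) * B
       \<le> (R (2*m) + R (Suc (2*m))) * B"
      by (simp only: distrib_right)
    also have "\<dots> \<le> (2 * R (2*(m+1))) * B"
    proof -
      have "R (2*m) \<le> R (2*(m+1))" "R (Suc (2*m)) \<le> R (2*(m+1))"
        using mono by (auto simp: monoD)
      then show ?thesis using B0 by (intro mult_right_mono) auto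
    qed
    also have "\<dots> \<le> (2 * (K * (K * R m))) * B"
    proof -
      have "R (m+1) \<le> R (2*m)" using mono m1 by (simp add: monoD)
      then have "K * R (m+1) \<le> K * (K * R m)"
        using K[of m] K0 by (intro mult_left_mono) auto
      then have "R (2*(m+1)) \<le> K * (K * R m)" using K[of "m+1"] by linarith
      then show ?thesis using B0 by (intro mult_right_mono) auto
    qed
    also have "\<dots> = M' * norm (c m)"
      unfolding B_def M'_def using pos[of m] by (simp add: field_simps)
    finally show ?thesis using S1 by linarith
  qed
  show ?thesis
  proof (intro exI conjI allI impI)
    show "(1::nat) \<ge> 1" by simp
    show "M' > 0" by (rule M'0)
    fix m :: nat assume "m \<ge> 1"
    then show "(\<Sum>n=m..2*m. norm (c n - c (n + 1))) \<le> M' * Max ((\<lambda>n. norm (c n)) ` {m..<m + 1})"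
      using main by simp
  qed
qed

end
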